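(* Let $k\in\mathbb{N}$, $\gamma\in\mathbb{N}$, and let $p_0,\dots,p_k$ be positive reals summing to $1$. Let $X_1,\dots,X_k$ have the negative multinomial distribution $$\Pr\{X_i=x_i,\ i=1,\dots,k\}=\frac\gamma n\,\frac{n!}{\prod_{i=0}^kx_i!}\prod_{i=0}^kp_i^{x_i},\qquad x_1,\dots,x_k\in\mathbb{Z}^+,$$ where $x_0=\gamma$ and $n=\sum_{i=0}^kx_i$. Let $X_0=\gamma$ and $\boldsymbol{X}=[X_0,\dots,X_k]^\top$. Let $z_0=\gamma$, let $z_1,\dots,z_k$ be nonnegative integers, $n=\sum_{i=0}^kz_i$, $\boldsymbol{z}=[z_0,\dots,z_k]^\top$, $\widehat\mu_i=np_i$ ($i=0,\dots,k$), $\widehat{\boldsymbol{\mu}}=[\widehat\mu_0,\dots,\widehat\mu_k]^\top$. Then $$\Pr\{\boldsymbol{X}\boldsymbol{\prec}\boldsymbol{z}\}\le\prod_{i=0}^k\Big(\frac{\widehat\mu_i}{z_i}\Big)^{z_i}\ \text{ if }\boldsymbol{z}\boldsymbol{\prec}\widehat{\boldsymbol{\mu}},\qquad \Pr\{\boldsymbol{X}\boldsymbol{\succ}\boldsymbol{z}\}\le\prod_{i=0}^k\Big(\frac{\widehat\mu_i}{z_i}\Big)^{z_i}\ \text{ if }\boldsymbol{z}\boldsymbol{\succ}\widehat{\boldsymbol{\mu}}.$$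
   Context: $\mathbb{Z}^+$ is the set of nonnegative integers. For vectors $\boldsymbol{x}=[x_0,\dots,x_k]^\top,\boldsymbol{y}=[y_0,\dots,y_k]^\top$, $\boldsymbol{x}\boldsymbol{\prec}\boldsymbol{y}$ means $x_i\le y_i$ for $i=1,\dots,k$ (index $0$ is not compared), and $\boldsymbol{x}\boldsymbol{\succ}\boldsymbol{y}$ means $x_i\ge y_i$ for $i=1,\dots,k$. The convention $0^0=1$ is used. *)

theory Defs
  imports "HOL-Analysis.Analysis"
begin

text \<open>Outcomes of the negative multinomial vector X = [X_0,...,X_k] with X_0 = gamma,
  encoded as functions nat => nat vanishing beyond index k.\<close>
definition nm_outcomes :: "nat \<Rightarrow> nat \<Rightarrow> (nat \<Rightarrow> nat) set" where
  "nm_outcomes k \<gamma> = {x. x 0 = \<gamma> \<and> (\<forall>i>k. x i = 0)}"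

definition nm_mass :: "nat \<Rightarrow> nat \<Rightarrow> (nat \<Rightarrow> real) \<Rightarrow> (nat \<Rightarrow> nat) \<Rightarrow> real" where
  "nm_mass k \<gamma> p x =
     (let n = (\<Sum>i\<le>k. x i) in
      (real \<gamma> / real n) * (fact n / (\<Prod>i\<le>k. fact (x i))) * (\<Prod>i\<le>k. p i ^ x i))"

definition nm_prob :: "nat \<Rightarrow> nat \<Rightarrow> (nat \<Rightarrow> real) \<Rightarrow> ((nat \<Rightarrow> nat) \<Rightarrow> bool) \<Rightarrow> ennreal" where
  "nm_prob k \<gamma> p P = (\<Sum>\<^sub>\<infinity>x\<in>{x\<in>nm_outcomes k \<gamma>. P x}. ennreal (nm_mass k \<gamma> p x))"

definition vprec :: "nat \<Rightarrow> (nat \<Rightarrow> 'a::ord) \<Rightarrow> (nat \<Rightarrow> 'a) \<Rightarrow> bool" where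
  "vprec k x y \<longleftrightarrow> (\<forall>i\<in>{1..k}. x i \<le> y i)"

end

theory Submission
  imports Defs
begin



lemma geom_le:
  fixes t :: real assumes "0 \<le> t" "t < 1"
  shows "(\<Sum>j\<le>M. t ^ j) \<le> 1 / (1 - t)"
proof -
  have e: "(1 - t) * (\<Sum>j\<le>M. t ^ j) = 1 - t ^ Suc M"
  proof (induction M)
    case 0 then show ?case by simp
  next
    case (Suc M)
    have "(1 - t) * (\<Sum>j\<le>Suc M. t ^ j) = (1 - t) * (\<Sum>j\<le>M. t ^ j) + (1 - t) * t ^ Suc M"
      by (simp add: algebra_simps)
    also have "\<dots> = 1 - t ^ Suc (Suc M)" using Suc by (simp add: algebra_simps)
    finally show ?case .
  qed
  have "(1 - t) * (\<Sum>j\<le>M. t ^ j) \<le> 1" unfolding e using assms by simp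
  then show ?thesis using assms by (simp add: field_simps mult.commute)
qed

lemma nb_identity:
  fixes t :: real
  shows "(1 - t) * (\<Sum>j\<le>M. real ((Suc a + j) choose j) * t ^ j)
       = (\<Sum>j\<le>M. real ((a + j) choose j) * t ^ j) - real ((Suc a + M) choose M) * t ^ Suc M"
proof (induction M)
  case 0 then show ?case by (simp add: algebra_simps)
next
  case (Suc M)
  define S' where "S' = (\<Sum>j\<le>M. real ((Suc a + j) choose j) * t ^ j)"
  define S where "S = (\<Sum>j\<le>M. real ((a + j) choose j) * t ^ j)"
  define A where "A = real ((Suc a + Suc M) choose Suc M)"
  define B where "B = real ((Suc a + M) choose M)"
  define C where "C = real ((a + Suc M) choose Suc M)"
  have pas: "A = B + C"
    unfolding A_def B_def C_def
    by (metis add_Suc_right add_Suc_shift binomial_Suc_Suc of_nat_add)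
  have l: "(\<Sum>j\<le>Suc M. real ((Suc a + j) choose j) * t ^ j) = S' + A * t ^ Suc M"
    unfolding S'_def A_def by simp
  have r: "(\<Sum>j\<le>Suc M. real ((a + j) choose j) * t ^ j) = S + C * t ^ Suc M"
    unfolding S_def C_def by simp
  have ih: "(1 - t) * S' = S - B * t ^ Suc M" using Suc unfolding S'_def S_def B_def .
  have "(1 - t) * (S' + A * t ^ Suc M) = S + C * t ^ Suc M - A * t ^ Suc (Suc M)"
    using ih pas by (simp add: algebra_simps)
  then show ?case unfolding l r A_def by simp
qed

lemma nb_le:
  fixes t :: real assumes "0 \<le> t" "t < 1"
  shows "(\<Sum>j\<le>M. real ((a + j) choose j) * t ^ j) \<le> 1 / (1 - t) ^ Suc a"
proof (induction a arbitrary: M)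
  case 0 then show ?case using geom_le[OF assms] by simp
next
  case (Suc a)
  have "(1 - t) * (\<Sum>j\<le>M. real ((Suc a + j) choose j) * t ^ j) \<le> (\<Sum>j\<le>M. real ((a + j) choose j) * t ^ j)"
    using nb_identity[where t=t and M=M and a=a] assms by simp
  also have "\<dots> \<le> 1 / (1 - t) ^ Suc a" by (rule Suc)
  finally have h: "(1 - t) * (\<Sum>j\<le>M. real ((Suc a + j) choose j) * t ^ j) \<le> 1 / (1 - t) ^ Suc a" .
  have pos: "1 - t > 0" using assms by simp
  have "(\<Sum>j\<le>M. real ((Suc a + j) choose j) * t ^ j) = ((1 - t) * (\<Sum>j\<le>M. real ((Suc a + j) choose j) * t ^ j)) / (1 - t)"
    using pos by simp
  also have "\<dots> \<le> (1 / (1 - t) ^ Suc a) / (1 - t)"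
    by (rule divide_right_mono[OF h]) (use pos in simp)
  also have "\<dots> = 1 / (1 - t) ^ Suc (Suc a)" by simp
  finally show ?case .
qed



definition Bx :: "nat \<Rightarrow> nat \<Rightarrow> nat \<Rightarrow> (nat \<Rightarrow> nat) set" where
  "Bx k g M = {x. x 0 = g \<and> (\<forall>i\<in>{1..k}. x i \<le> M) \<and> (\<forall>i>k. x i = 0)}"

definition hh :: "nat \<Rightarrow> nat \<Rightarrow> (nat \<Rightarrow> real) \<Rightarrow> (nat \<Rightarrow> nat) \<Rightarrow> real" where
  "hh k c q x = fact (c + (\<Sum>i\<in>{1..k}. x i)) / (fact c * (\<Prod>i\<in>{1..k}. fact (x i))) * (\<Prod>i\<in>{1..k}. q i ^ x i)"

lemma Bx_0: "Bx 0 g M = {(\<lambda>i. if i = 0 then g else 0)}"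
  unfolding Bx_def by (auto simp: fun_eq_iff)

lemma Bx_Suc: "Bx (Suc k) g M = (\<lambda>(x,j). x(Suc k := j)) ` (Bx k g M \<times> {..M})"
proof
  show "Bx (Suc k) g M \<subseteq> (\<lambda>(x,j). x(Suc k := j)) ` (Bx k g M \<times> {..M})"
  proof
    fix y assume y: "y \<in> Bx (Suc k) g M"
    have "y = (\<lambda>(x,j). x(Suc k := j)) (y(Suc k := 0), y (Suc k))" by simp
    moreover have "(y(Suc k := 0), y (Suc k)) \<in> Bx k g M \<times> {..M}"
      using y unfolding Bx_def by auto
    ultimately show "y \<in> (\<lambda>(x,j). x(Suc k := j)) ` (Bx k g M \<times> {..M})" by blast
  qed
next
  show "(\<lambda>(x,j). x(Suc k := j)) ` (Bx k g M \<times> {..M}) \<subseteq> Bx (Suc k) g M"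
    unfolding Bx_def by auto
qed

lemma Bx_inj: "inj_on (\<lambda>(x,j). x(Suc k := j)) (Bx k g M \<times> {..M})"
proof (rule inj_onI, clarsimp)
  fix x j y l
  assume "x \<in> Bx k g M" "y \<in> Bx k g M" and e: "x(Suc k := j) = y(Suc k := l)"
  then have "x (Suc k) = 0" "y (Suc k) = 0" unfolding Bx_def by auto
  moreover have "j = l" using fun_cong[OF e, of "Suc k"] by simp
  ultimately show "x = y \<and> j = l" using e by (metis fun_upd_triv fun_upd_upd)
qed

lemma Bx_finite: "finite (Bx k g M)"
  by (induction k) (auto simp: Bx_0 Bx_Suc)

lemma hh_nonneg: "(\<forall>i\<in>{1..k}. 0 \<le> q i) \<Longrightarrow> 0 \<le> hh k c q x"
  unfolding hh_def by (auto intro!: mult_nonneg_nonneg divide_nonneg_nonneg prod_nonneg sum_nonneg)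

lemma hh_Suc:
  assumes "x \<in> Bx k g M"
  shows "hh (Suc k) c q (x(Suc k := j)) = hh k c q x * real ((c + (\<Sum>i\<in>{1..k}. x i) + j) choose j) * q (Suc k) ^ j"
proof -
  define m where "m = (\<Sum>i\<in>{1..k}. x i)"
  define P where "P = (\<Prod>i\<in>{1..k}. fact (x i) :: real)"
  define Q where "Q = (\<Prod>i\<in>{1..k}. q i ^ x i)"
  have s: "(\<Sum>i\<in>{1..Suc k}. (x(Suc k := j)) i) = m + j"
    unfolding m_def by (simp add: sum.cl_ivl_Suc)
  have p: "(\<Prod>i\<in>{1..Suc k}. fact ((x(Suc k := j)) i) :: real) = P * fact j"
    unfolding P_def by (simp add: prod.cl_ivl_Suc)
  have p2: "(\<Prod>i\<in>{1..Suc k}. q i ^ (x(Suc k := j)) i) = Q * q (Suc k) ^ j"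
    unfolding Q_def by (simp add: prod.cl_ivl_Suc)
  have b: "real ((c + m + j) choose j) = fact (c + m + j) / (fact j * fact (c + m))"
    by (subst binomial_fact) auto
  have Pp: "P > 0" unfolding P_def by (auto intro: prod_pos)
  show ?thesis
    unfolding hh_def s p p2 m_def[symmetric] P_def[symmetric] Q_def[symmetric] b
    using Pp by (simp add: field_simps add.assoc)
qed

lemma hh_scale:
  assumes "d \<noteq> 0"
  shows "hh k c (\<lambda>i. q i / d) x = hh k c q x / d ^ (\<Sum>i\<in>{1..k}. x i)"
proof -
  have "(\<Prod>i\<in>{1..k}. (q i / d) ^ x i) = (\<Prod>i\<in>{1..k}. q i ^ x i) / d ^ (\<Sum>i\<in>{1..k}. x i)"
    by (simp add: power_divide prod_dividef power_sum)
  then show ?thesis unfolding hh_def by simp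
qed

lemma box_bound:
  "\<forall>q. (\<forall>i\<in>{1..k}. 0 \<le> q i) \<longrightarrow> (\<Sum>i\<in>{1..k}. q i) < 1 \<longrightarrow>
     (\<Sum>x\<in>Bx k g M. hh k c q x) \<le> 1 / (1 - (\<Sum>i\<in>{1..k}. q i)) ^ Suc c"
proof (induction k)
  case 0
  show ?case by (simp add: Bx_0 hh_def)
next
  case (Suc k)
  show ?case
  proof (intro allI impI)
    fix q :: "nat \<Rightarrow> real"
    assume q0: "\<forall>i\<in>{1..Suc k}. 0 \<le> q i" and qs: "(\<Sum>i\<in>{1..Suc k}. q i) < 1"
    define t where "t = q (Suc k)"
    define s where "s = (\<Sum>i\<in>{1..k}. q i)"
    have ssuc: "(\<Sum>i\<in>{1..Suc k}. q i) = s + t" unfolding s_def t_def by (simp add: sum.cl_ivl_Suc)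
    have t0: "0 \<le> t" using q0 unfolding t_def by auto
    have s0: "0 \<le> s" using q0 unfolding s_def by (auto intro: sum_nonneg)
    have t1: "t < 1" using qs ssuc s0 by simp
    have d0: "1 - t > 0" using t1 by simp
    define q' where "q' = (\<lambda>i. q i / (1 - t))"
    have q'0: "\<forall>i\<in>{1..k}. 0 \<le> q' i" using q0 d0 unfolding q'_def by auto
    have s': "(\<Sum>i\<in>{1..k}. q' i) = s / (1 - t)" unfolding q'_def s_def by (simp add: sum_divide_distrib)
    have s'1: "(\<Sum>i\<in>{1..k}. q' i) < 1" unfolding s' using d0 qs ssuc by (simp add: field_simps)
    have IH: "(\<Sum>x\<in>Bx k g M. hh k c q' x) \<le> 1 / (1 - s / (1 - t)) ^ Suc c"
      using mp[OF mp[OF spec[OF Suc.IH, of q'] q'0] s'1] by (simp only: s')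
    have hk0: "\<And>x. 0 \<le> hh k c q x" by (rule hh_nonneg) (use q0 in auto)
    let ?m = "\<lambda>x. (\<Sum>i\<in>{1..k}. x i)"
    have "(\<Sum>x\<in>Bx (Suc k) g M. hh (Suc k) c q x)
        = (\<Sum>p\<in>Bx k g M \<times> {..M}. hh (Suc k) c q ((\<lambda>(x,j). x(Suc k := j)) p))"
      unfolding Bx_Suc by (rule sum.reindex[OF Bx_inj, unfolded comp_def])
    also have "\<dots> = (\<Sum>x\<in>Bx k g M. \<Sum>j\<le>M. hh (Suc k) c q (x(Suc k := j)))"
      by (simp add: sum.cartesian_product split_def)
    also have "\<dots> = (\<Sum>x\<in>Bx k g M. hh k c q x * (\<Sum>j\<le>M. real ((c + ?m x + j) choose j) * t ^ j))"
    proof (intro sum.cong refl)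
      fix x assume x: "x \<in> Bx k g M"
      have "(\<Sum>j\<le>M. hh (Suc k) c q (x(Suc k := j))) = (\<Sum>j\<le>M. hh k c q x * (real ((c + ?m x + j) choose j) * t ^ j))"
        by (intro sum.cong refl) (simp only: hh_Suc[OF x] t_def mult.assoc)
      then show "(\<Sum>j\<le>M. hh (Suc k) c q (x(Suc k := j))) = hh k c q x * (\<Sum>j\<le>M. real ((c + ?m x + j) choose j) * t ^ j)"
        by (simp only: sum_distrib_left)
    qed
    also have "\<dots> \<le> (\<Sum>x\<in>Bx k g M. hh k c q x * (1 / (1 - t) ^ Suc (c + ?m x)))"
      by (intro sum_mono mult_left_mono nb_le t0 t1 hk0)
    also have "\<dots> = (\<Sum>x\<in>Bx k g M. hh k c q' x / (1 - t) ^ Suc c)"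
    proof (intro sum.cong refl)
      fix x
      have e: "(1 - t) ^ Suc (c + ?m x) = (1 - t) ^ Suc c * (1 - t) ^ ?m x" by (simp add: power_add)
      have "hh k c q' x = hh k c q x / (1 - t) ^ ?m x" unfolding q'_def by (rule hh_scale) (use d0 in simp)
      then show "hh k c q x * (1 / (1 - t) ^ Suc (c + ?m x)) = hh k c q' x / (1 - t) ^ Suc c"
        unfolding e by simp
    qed
    also have "\<dots> = (\<Sum>x\<in>Bx k g M. hh k c q' x) / (1 - t) ^ Suc c"
      by (simp add: sum_divide_distrib)
    also have "\<dots> \<le> (1 / (1 - s / (1 - t)) ^ Suc c) / (1 - t) ^ Suc c"
      by (rule divide_right_mono[OF IH]) (use d0 in simp)
    also have "\<dots> = 1 / ((1 - s / (1 - t)) * (1 - t)) ^ Suc c"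
      by (simp add: power_mult_distrib)
    also have "(1 - s / (1 - t)) * (1 - t) = 1 - (\<Sum>i\<in>{1..Suc k}. q i)"
      unfolding ssuc using d0 by (simp add: field_simps)
    finally show "(\<Sum>x\<in>Bx (Suc k) g M. hh (Suc k) c q x) \<le> 1 / (1 - (\<Sum>i\<in>{1..Suc k}. q i)) ^ Suc c" .
  qed
qed


lemma atMost_split: "{..k::nat} = insert 0 {1..k}" by auto

lemma mass_eq:
  assumes x: "x \<in> nm_outcomes k \<gamma>" and g: "\<gamma> \<ge> 1"
  shows "nm_mass k \<gamma> q x = q 0 ^ \<gamma> * hh k (\<gamma> - 1) q x"
proof -
  obtain g where gg: "\<gamma> = Suc g" using g by (cases \<gamma>) auto
  have x0: "x 0 = \<gamma>" using x unfolding nm_outcomes_def by auto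
  define m where "m = (\<Sum>i\<in>{1..k}. x i)"
  define P where "P = (\<Prod>i\<in>{1..k}. fact (x i) :: real)"
  define Q where "Q = (\<Prod>i\<in>{1..k}. q i ^ x i)"
  have n: "(\<Sum>i\<le>k. x i) = Suc g + m" unfolding atMost_split m_def by (simp add: x0 gg)
  have pf: "(\<Prod>i\<le>k. fact (x i) :: real) = fact (Suc g) * P" unfolding atMost_split P_def by (simp add: x0 gg)
  have pq: "(\<Prod>i\<le>k. q i ^ x i) = q 0 ^ Suc g * Q" unfolding atMost_split Q_def by (simp add: x0 gg)
  have f1: "(fact (Suc g + m) :: real) = real (Suc g + m) * fact (g + m)"
    by (metis add_Suc fact_Suc of_nat_fact of_nat_mult)
  have f2: "(fact (Suc g) :: real) = real (Suc g) * fact g"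
    by (metis fact_Suc of_nat_fact of_nat_mult)
  have Pp: "P > 0" unfolding P_def by (auto intro: prod_pos)
  have "nm_mass k \<gamma> q x = real (Suc g) / real (Suc g + m) * (fact (Suc g + m) / (fact (Suc g) * P)) * (q 0 ^ Suc g * Q)"
    unfolding nm_mass_def Let_def n pf pq gg ..
  also have "\<dots> = q 0 ^ Suc g * (fact (g + m) / (fact g * P) * Q)"
    unfolding f1 f2 using Pp by (simp add: field_simps del: of_nat_Suc of_nat_add)
  also have "\<dots> = q 0 ^ \<gamma> * hh k (\<gamma> - 1) q x"
    unfolding hh_def gg m_def P_def Q_def by simp
  finally show ?thesis .
qed

lemma mass_nonneg:
  assumes "\<forall>i\<le>k. 0 \<le> q i"
  shows "0 \<le> nm_mass k \<gamma> q x"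
  unfolding nm_mass_def Let_def using assms
  by (auto intro!: mult_nonneg_nonneg divide_nonneg_nonneg prod_nonneg sum_nonneg)

lemma total_bound:
  assumes g: "\<gamma> \<ge> 1" and q0: "q 0 > 0" and qn: "\<forall>i\<le>k. 0 \<le> q i" and qs: "(\<Sum>i\<le>k. q i) = 1"
    and F: "finite F" "F \<subseteq> nm_outcomes k \<gamma>"
  shows "(\<Sum>x\<in>F. nm_mass k \<gamma> q x) \<le> 1"
proof -
  define M where "M = (\<Sum>x\<in>F. \<Sum>i\<le>k. x i)"
  have FB: "F \<subseteq> Bx k \<gamma> M"
  proof
    fix x assume xF: "x \<in> F"
    have "\<forall>i\<in>{1..k}. x i \<le> M"
    proof
      fix i assume i: "i \<in> {1..k}"
      have "x i \<le> (\<Sum>i\<le>k. x i)" using i by (intro member_le_sum) auto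
      also have "\<dots> \<le> M" unfolding M_def using xF F(1) by (intro member_le_sum) auto
      finally show "x i \<le> M" .
    qed
    then show "x \<in> Bx k \<gamma> M" using xF F(2) unfolding Bx_def nm_outcomes_def by auto
  qed
  have BO: "Bx k \<gamma> M \<subseteq> nm_outcomes k \<gamma>" unfolding Bx_def nm_outcomes_def by auto
  have "(\<Sum>x\<in>F. nm_mass k \<gamma> q x) \<le> (\<Sum>x\<in>Bx k \<gamma> M. nm_mass k \<gamma> q x)"
    by (rule sum_mono2[OF Bx_finite FB]) (rule mass_nonneg[OF qn])
  also have "\<dots> = q 0 ^ \<gamma> * (\<Sum>x\<in>Bx k \<gamma> M. hh k (\<gamma> - 1) q x)"
    unfolding sum_distrib_left using BO by (intro sum.cong refl mass_eq g) auto
  also have "\<dots> \<le> q 0 ^ \<gamma> * (1 / (1 - (\<Sum>i\<in>{1..k}. q i)) ^ Suc (\<gamma> - 1))"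
  proof (rule mult_left_mono)
    have s: "(\<Sum>i\<in>{1..k}. q i) = 1 - q 0" using qs unfolding atMost_split by simp
    show "(\<Sum>x\<in>Bx k \<gamma> M. hh k (\<gamma> - 1) q x) \<le> 1 / (1 - (\<Sum>i\<in>{1..k}. q i)) ^ Suc (\<gamma> - 1)"
      using spec[OF box_bound[where k=k and g=\<gamma> and M=M and c="\<gamma> - 1"], of q] qn q0 unfolding s by auto
  qed (use q0 in simp)
  also have "\<dots> = 1"
  proof -
    have s: "1 - (\<Sum>i\<in>{1..k}. q i) = q 0" using qs unfolding atMost_split by simp
    have "Suc (\<gamma> - 1) = \<gamma>" using g by simp
    then show ?thesis unfolding s using q0 by simp
  qed
  finally show ?thesis .
qed

lemma sc_eq:
  fixes N P :: real and Z X :: nat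
  assumes "X = Z" "N > 0" "P > 0"
  shows "P ^ X \<le> (N * P / real Z) ^ Z * (real Z / N) ^ X"
proof (cases "Z = 0")
  case True then show ?thesis using assms by simp
next
  case False
  have "(N * P / real Z) ^ Z * (real Z / N) ^ X = (N * P / real Z * (real Z / N)) ^ Z"
    using assms by (simp only: power_mult_distrib)
  also have "N * P / real Z * (real Z / N) = P" using False assms by simp
  finally show ?thesis using assms by simp
qed

lemma sc_low:
  fixes N P :: real and Z X :: nat
  assumes "X \<le> Z" "real Z \<le> N * P" "N > 0" "P > 0"
  shows "P ^ X \<le> (N * P / real Z) ^ Z * (real Z / N) ^ X"
proof (cases "Z = 0")
  case True then show ?thesis using assms by simp
next
  case False
  have r1: "1 \<le> N * P / real Z" using False assms by simp
  have "(N * P / real Z) ^ Z * (real Z / N) ^ X = (N * P / real Z) ^ (Z - X) * ((N * P / real Z) ^ X * (real Z / N) ^ X)"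
  proof -
    have "(N * P / real Z) ^ Z = (N * P / real Z) ^ (Z - X) * (N * P / real Z) ^ X"
      by (metis assms(1) le_add_diff_inverse2 power_add)
    then show ?thesis by (simp only: mult.assoc)
  qed
  also have "\<dots> = (N * P / real Z) ^ (Z - X) * ((N * P / real Z) * (real Z / N)) ^ X"
    by (simp only: power_mult_distrib)
  also have "(N * P / real Z) * (real Z / N) = P" using False assms by simp
  finally have e: "(N * P / real Z) ^ Z * (real Z / N) ^ X = (N * P / real Z) ^ (Z - X) * P ^ X" .
  have "1 \<le> (N * P / real Z) ^ (Z - X)" using r1 by (rule one_le_power)
  then have "1 * P ^ X \<le> (N * P / real Z) ^ (Z - X) * P ^ X"
    by (rule mult_right_mono) (use assms in simp)
  then show ?thesis unfolding e by simp
qed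

lemma sc_up:
  fixes N P :: real and Z X :: nat
  assumes "Z \<le> X" "N * P \<le> real Z" "N > 0" "P > 0"
  shows "P ^ X \<le> (N * P / real Z) ^ Z * (real Z / N) ^ X"
proof -
  have Z0: "real Z > 0" using assms by (smt (verit) mult_pos_pos)
  have r1: "P \<le> real Z / N" using assms by (simp add: field_simps mult.commute)
  have "(N * P / real Z) ^ Z * (real Z / N) ^ X = ((N * P / real Z) ^ Z * (real Z / N) ^ Z) * (real Z / N) ^ (X - Z)"
  proof -
    have "(real Z / N) ^ X = (real Z / N) ^ Z * (real Z / N) ^ (X - Z)"
      by (metis assms(1) le_add_diff_inverse power_add)
    then show ?thesis by (simp only: mult.assoc)
  qed
  also have "\<dots> = ((N * P / real Z) * (real Z / N)) ^ Z * (real Z / N) ^ (X - Z)"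
    by (simp only: power_mult_distrib)
  also have "(N * P / real Z) * (real Z / N) = P" using Z0 assms by simp
  finally have e: "(N * P / real Z) ^ Z * (real Z / N) ^ X = P ^ Z * (real Z / N) ^ (X - Z)" .
  have "P ^ (X - Z) \<le> (real Z / N) ^ (X - Z)" using r1 assms by (intro power_mono) auto
  then have "P ^ Z * P ^ (X - Z) \<le> P ^ Z * (real Z / N) ^ (X - Z)"
    by (rule mult_left_mono) (use assms in simp)
  then show ?thesis unfolding e using assms by (simp flip: power_add)
qed

lemma mass_cmp:
  assumes "\<forall>i\<le>k. 0 \<le> p i ^ x i \<and> p i ^ x i \<le> c i * q i ^ x i"
  shows "nm_mass k \<gamma> p x \<le> (\<Prod>i\<le>k. c i) * nm_mass k \<gamma> q x"
proof -
  define A where "A = real \<gamma> / real (\<Sum>i\<le>k. x i) * (fact (\<Sum>i\<le>k. x i) / (\<Prod>i\<le>k. fact (x i)))"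
  have A0: "0 \<le> A" unfolding A_def by (auto intro!: mult_nonneg_nonneg divide_nonneg_nonneg prod_nonneg sum_nonneg)
  have "(\<Prod>i\<le>k. p i ^ x i) \<le> (\<Prod>i\<le>k. c i * q i ^ x i)"
    using assms by (intro prod_mono) auto
  also have "\<dots> = (\<Prod>i\<le>k. c i) * (\<Prod>i\<le>k. q i ^ x i)" by (rule prod.distrib)
  finally have "A * (\<Prod>i\<le>k. p i ^ x i) \<le> A * ((\<Prod>i\<le>k. c i) * (\<Prod>i\<le>k. q i ^ x i))"
    by (rule mult_left_mono[OF _ A0])
  then show ?thesis unfolding nm_mass_def Let_def A_def[symmetric] by (simp add: algebra_simps)
qed

lemma event_bound:
  assumes g: "\<gamma> \<ge> 1" and pp: "\<forall>i\<le>k. 0 \<le> p i" and q0: "q 0 > 0" and qn: "\<forall>i\<le>k. 0 \<le> q i"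
    and qs: "(\<Sum>i\<le>k. q i) = 1" and C0: "0 \<le> C"
    and cmp: "\<And>x. x \<in> nm_outcomes k \<gamma> \<Longrightarrow> Pr x \<Longrightarrow> nm_mass k \<gamma> p x \<le> C * nm_mass k \<gamma> q x"
  shows "nm_prob k \<gamma> p Pr \<le> ennreal C"
proof -
  let ?E = "{x \<in> nm_outcomes k \<gamma>. Pr x}"
  have "nm_prob k \<gamma> p Pr = (SUP F\<in>{F. finite F \<and> F \<subseteq> ?E}. sum (\<lambda>x. ennreal (nm_mass k \<gamma> p x)) F)"
    unfolding nm_prob_def by (rule nonneg_infsum_complete) simp
  also have "\<dots> \<le> ennreal C"
  proof (rule SUP_least)
    fix F assume F: "F \<in> {F. finite F \<and> F \<subseteq> ?E}"
    have "sum (\<lambda>x. ennreal (nm_mass k \<gamma> p x)) F = ennreal (\<Sum>x\<in>F. nm_mass k \<gamma> p x)"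
      by (rule sum_ennreal) (rule mass_nonneg[OF pp])
    also have "\<dots> \<le> ennreal C"
    proof (rule ennreal_leI)
      have "(\<Sum>x\<in>F. nm_mass k \<gamma> p x) \<le> (\<Sum>x\<in>F. C * nm_mass k \<gamma> q x)"
        using F by (intro sum_mono cmp) auto
      also have "\<dots> = C * (\<Sum>x\<in>F. nm_mass k \<gamma> q x)" by (simp add: sum_distrib_left)
      also have "\<dots> \<le> C * 1"
        by (rule mult_left_mono[OF total_bound[OF g q0 qn qs] C0]) (use F in auto)
      finally show "(\<Sum>x\<in>F. nm_mass k \<gamma> p x) \<le> C" by simp
    qed
    finally show "sum (\<lambda>x. ennreal (nm_mass k \<gamma> p x)) F \<le> ennreal C" .
  qed
  finally show ?thesis .
qed


theorem corollary2:
  fixes k \<gamma> :: nat and p :: "nat \<Rightarrow> real" and z :: "nat \<Rightarrow> nat"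
  assumes "\<gamma> \<ge> 1"
    and "\<forall>i\<le>k. p i > 0"
    and "(\<Sum>i\<le>k. p i) = 1"
    and "z 0 = \<gamma>"
  defines "n \<equiv> (\<Sum>i\<le>k. z i)"
  defines "\<mu> \<equiv> (\<lambda>i. real n * p i)"
  shows "(vprec k (\<lambda>i. real (z i)) \<mu> \<longrightarrow>
           nm_prob k \<gamma> p (\<lambda>x. vprec k x z) \<le> ennreal (\<Prod>i\<le>k. (\<mu> i / real (z i)) ^ z i))
       \<and> (vprec k \<mu> (\<lambda>i. real (z i)) \<longrightarrow>
           nm_prob k \<gamma> p (\<lambda>x. vprec k z x) \<le> ennreal (\<Prod>i\<le>k. (\<mu> i / real (z i)) ^ z i))"
proof -
  note g = assms(1)
  have pp: "\<forall>i\<le>k. 0 \<le> p i" using assms(2) by auto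
  have "z 0 \<le> n" unfolding n_def by (rule member_le_sum) auto
  then have N0: "real n > 0" using assms(1,4) by simp
  define q where "q = (\<lambda>i. real (z i) / real n)"
  have q0: "q 0 > 0" unfolding q_def using N0 assms(1,4) by simp
  have qn: "\<forall>i\<le>k. 0 \<le> q i" unfolding q_def by simp
  have qs: "(\<Sum>i\<le>k. q i) = 1" unfolding q_def using N0
    by (simp add: sum_divide_distrib[symmetric] n_def)
  define c where "c = (\<lambda>i. (\<mu> i / real (z i)) ^ z i)"
  have C0: "0 \<le> (\<Prod>i\<le>k. c i)" unfolding c_def \<mu>_def using N0 pp
    by (intro prod_nonneg) auto
  have ceq: "(\<Prod>i\<le>k. (\<mu> i / real (z i)) ^ z i) = (\<Prod>i\<le>k. c i)" unfolding c_def ..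
  have pw: "p i ^ x i \<le> c i * q i ^ x i"
    if i: "i \<le> k" and xo: "x \<in> nm_outcomes k \<gamma>" and h: "i \<noteq> 0 \<Longrightarrow> x i \<le> z i \<and> real (z i) \<le> \<mu> i \<or> z i \<le> x i \<and> \<mu> i \<le> real (z i)"
    for i x
  proof (cases "i = 0")
    case True
    then have "x i = z i" using xo assms(4) unfolding nm_outcomes_def by auto
    then show ?thesis unfolding c_def q_def \<mu>_def using sc_eq N0 assms(2) i by blast
  next
    case False
    then consider "x i \<le> z i" "real (z i) \<le> \<mu> i" | "z i \<le> x i" "\<mu> i \<le> real (z i)" using h[OF False] by blast
    then show ?thesis
    proof cases
      case 1 then show ?thesis unfolding c_def q_def \<mu>_def using sc_low N0 assms(2) i unfolding \<mu>_def by blast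
    next
      case 2 then show ?thesis unfolding c_def q_def \<mu>_def using sc_up N0 assms(2) i unfolding \<mu>_def by blast
    qed
  qed
  have cnn: "0 \<le> p i ^ x i" if "i \<le> k" for i x using pp that by simp
  show ?thesis
  proof (intro conjI impI)
    assume v: "vprec k (\<lambda>i. real (z i)) \<mu>"
    show "nm_prob k \<gamma> p (\<lambda>x. vprec k x z) \<le> ennreal (\<Prod>i\<le>k. (\<mu> i / real (z i)) ^ z i)"
      unfolding ceq
    proof (rule event_bound[OF g pp q0 qn qs C0])
      fix x assume x: "x \<in> nm_outcomes k \<gamma>" and vx: "vprec k x z"
      show "nm_mass k \<gamma> p x \<le> (\<Prod>i\<le>k. c i) * nm_mass k \<gamma> q x"
      proof (rule mass_cmp, intro allI impI conjI)
        fix i assume i: "i \<le> k"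
        show "0 \<le> p i ^ x i" using cnn i .
        show "p i ^ x i \<le> c i * q i ^ x i"
          by (rule pw[OF i x]) (use v vx i in \<open>auto simp: vprec_def\<close>)
      qed
    qed
  next
    assume v: "vprec k \<mu> (\<lambda>i. real (z i))"
    show "nm_prob k \<gamma> p (\<lambda>x. vprec k z x) \<le> ennreal (\<Prod>i\<le>k. (\<mu> i / real (z i)) ^ z i)"
      unfolding ceq
    proof (rule event_bound[OF g pp q0 qn qs C0])
      fix x assume x: "x \<in> nm_outcomes k \<gamma>" and vx: "vprec k z x"
      show "nm_mass k \<gamma> p x \<le> (\<Prod>i\<le>k. c i) * nm_mass k \<gamma> q x"
      proof (rule mass_cmp, intro allI impI conjI)
        fix i assume i: "i \<le> k"
        show "0 \<le> p i ^ x i" using cnn i .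
        show "p i ^ x i \<le> c i * q i ^ x i"
          by (rule pw[OF i x]) (use v vx i in \<open>auto simp: vprec_def\<close>)
      qed
    qed
  qed
qed

end
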